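(* Let $\zeta_1\in\mathbb{C}_+$, $\bar\zeta_1\in\mathbb{C}_-$ and $\omega_1,\bar\omega_1\in\{1,-1\}$. Then: (a) the function $$q(x,t)=2i(\bar\zeta_1-\zeta_1)\frac{\bar\omega_1e^{-2i\bar\zeta_1x-4i\bar\zeta_1^2t}}{1+\omega_1\bar\omega_1e^{-2i(\bar\zeta_1-\zeta_1)x-4i(\bar\zeta_1^2-\zeta_1^2)t}}$$ satisfies the reverse-space-time NLS equation $iq_t(x,t)+q_{xx}(x,t)+2q^2(x,t)q(-x,-t)=0$ wherever the denominator is nonzero; (b) with $V=-2\,\mathrm{Im}(\bar\zeta_1^2-\zeta_1^2)/\mathrm{Im}(\bar\zeta_1-\zeta_1)$, $\beta=2V\,\mathrm{Im}(\bar\zeta_1)+4\,\mathrm{Im}(\bar\zeta_1^2)$ and $\gamma=-2V\,\mathrm{Re}(\bar\zeta_1-\zeta_1)-4\,\mathrm{Re}(\bar\zeta_1^2-\zeta_1^2)$, one has along the line $x=Vt$ $$|q(Vt,t)|=\frac{2|\bar\zeta_1-\zeta_1|\,e^{\beta t}}{\left|1+\omega_1\bar\omega_1e^{i\gamma t}\right|},$$ and $\gamma=4|\zeta_1-\bar\zeta_1|^2\,\mathrm{Im}(\zeta_1+\bar\zeta_1)/\mathrm{Im}(\bar\zeta_1-\zeta_1)$. In particular, if $\mathrm{Im}(\zeta_1+\bar\zeta_1)\neq0$ then $q$ becomes singular (its denominator vanishes) along $x=Vt$ periodically in $t$ with period $2\pi/|\gamma|$.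
   Context: $\mathbb{C}_\pm$ denote the open upper/lower half planes; $\mathrm{Re},\mathrm{Im}$ denote real and imaginary parts. *)

theory Defs
  imports "HOL-Analysis.Analysis"
begin

definition soliton_den :: "complex \<Rightarrow> complex \<Rightarrow> complex \<Rightarrow> complex \<Rightarrow> real \<Rightarrow> real \<Rightarrow> complex" where
  "soliton_den z zb w wb x t =
     1 + w * wb * exp (- 2 * \<i> * (zb - z) * of_real x - 4 * \<i> * (zb\<^sup>2 - z\<^sup>2) * of_real t)"

definition soliton_q :: "complex \<Rightarrow> complex \<Rightarrow> complex \<Rightarrow> complex \<Rightarrow> real \<Rightarrow> real \<Rightarrow> complex" where
  "soliton_q z zb w wb x t =
     2 * \<i> * (zb - z) * (wb * exp (- 2 * \<i> * zb * of_real x - 4 * \<i> * zb\<^sup>2 * of_real t))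
       / soliton_den z zb w wb x t"

end

theory Submission
  imports Defs
begin


lemma d1:
  fixes K p p0 c r r0 :: complex and y :: real
  assumes "1 + c*exp(r * of_real y + r0) \<noteq> 0"
  shows "((\<lambda>y::real. K*exp(p * of_real y+p0)/(1+c*exp(r * of_real y+r0))) has_vector_derivative
     (K*exp(p * of_real y+p0)*(p + c*(p-r)*exp(r * of_real y+r0))/(1+c*exp(r * of_real y+r0))^2)) (at y)"
proof -
  have "((\<lambda>u. K*exp(p*u+p0)/(1+c*exp(r*u+r0))) has_field_derivative
     (K*exp(p * of_real y+p0)*(p + c*(p-r)*exp(r * of_real y+r0))/(1+c*exp(r * of_real y+r0))^2)) (at (of_real y))"

    apply (rule derivative_eq_intros refl)+
    apply (rule assms)
    apply (simp add: power2_eq_square algebra_simps)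
    done
  from has_vector_derivative_real_field[OF this] show ?thesis .
qed


lemma d2:
  fixes K p p0 c r r0 :: complex and y :: real
  assumes "1 + c*exp(r * of_real y + r0) \<noteq> 0"
  shows "((\<lambda>y::real. K*exp(p * of_real y+p0)*(p + c*(p-r)*exp(r * of_real y+r0))/(1+c*exp(r * of_real y+r0))^2) has_vector_derivative
     (K*exp(p * of_real y+p0)*(p^2 + c*(2*p^2-2*p*r-r^2)*exp(r * of_real y+r0) + c^2*(p-r)^2*exp(r * of_real y+r0)^2)/(1+c*exp(r * of_real y+r0))^3)) (at y)"
proof -
  have "((\<lambda>u. K*exp(p*u+p0)*(p + c*(p-r)*exp(r*u+r0))/(1+c*exp(r*u+r0))^2) has_field_derivative
     (K*exp(p * of_real y+p0)*(p^2 + c*(2*p^2-2*p*r-r^2)*exp(r * of_real y+r0) + c^2*(p-r)^2*exp(r * of_real y+r0)^2)/(1+c*exp(r * of_real y+r0))^3)) (at (of_real y))"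
    apply (rule derivative_eq_intros refl)+
    using assms apply simp
    using assms apply (simp add: divide_simps)
    apply algebra
    done
  from has_vector_derivative_real_field[OF this] show ?thesis .
qed

lemma gen3:
  fixes K E A B Dn c R :: complex
  assumes "E \<noteq> 0" "Dn \<noteq> 0"
  shows "\<i>*(K*E*A/Dn^2) + K*E*B/Dn^3 + 2*(K*E/Dn)^2*(K*c*R/(E*Dn)) = K*E*(\<i>*A*Dn + B + 2*K^2*c*R)/Dn^3"
  using assms by (simp add: field_simps power2_eq_square power3_eq_cube)

lemma alg:
  fixes a b c wb E R :: complex
  assumes c: "c = 1 \<or> c = -1" and wb: "wb = 1 \<or> wb = -1"
    and E: "E \<noteq> 0" and R: "R \<noteq> 0" and D: "1 + c*R \<noteq> 0"
  defines "K \<equiv> 2*\<i>*(a-b)*wb" and "pt \<equiv> -4*\<i>*a^2" and "rt \<equiv> -4*\<i>*(a^2-b^2)"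
    and "px \<equiv> -2*\<i>*a" and "rx \<equiv> -2*\<i>*(a-b)"
  shows "\<i> * (K*E*(pt + c*(pt-rt)*R)/(1+c*R)^2)
     + K*E*(px^2 + c*(2*px^2-2*px*rx-rx^2)*R + c^2*(px-rx)^2*R^2)/(1+c*R)^3
     + 2*(K*E/(1+c*R))^2*(K*inverse E/(1+c*inverse R)) = 0"
proof -
  have c2: "c^2 = 1" using c by auto
  have w2: "wb^2 = 1" using wb by auto
  have qm: "K*inverse E/(1+c*inverse R) = K*c*R/(E*(1+c*R))"
    using c
  proof
    assume "c = 1" then show ?thesis using E R D by (simp add: field_simps)
  next
    assume "c = -1" then show ?thesis using E R D by (simp add: field_simps)
  qed
  have K2: "K^2 = -4*(a-b)^2" unfolding K_def using w2 by (simp add: power_mult_distrib)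
  have "\<i> * (K*E*(pt + c*(pt-rt)*R)/(1+c*R)^2)
     + K*E*(px^2 + c*(2*px^2-2*px*rx-rx^2)*R + c^2*(px-rx)^2*R^2)/(1+c*R)^3
     + 2*(K*E/(1+c*R))^2*(K*c*R/(E*(1+c*R)))
     = K*E*(\<i>*(pt + c*(pt-rt)*R)*(1+c*R) + (px^2 + c*(2*px^2-2*px*rx-rx^2)*R + c^2*(px-rx)^2*R^2) + 2*K^2*c*R)/(1+c*R)^3"
    using gen3[OF E D] by simp
  also have "\<i>*(pt + c*(pt-rt)*R)*(1+c*R) + (px^2 + c*(2*px^2-2*px*rx-rx^2)*R + c^2*(px-rx)^2*R^2) + 2*K^2*c*R = 0"
    unfolding K2 pt_def rt_def px_def rx_def using c2
    by (simp add: algebra_simps power2_eq_square)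
  finally show ?thesis by (simp add: qm)
qed

lemma RVlem:
  fixes d e :: complex and t :: real
  assumes "Im d \<noteq> 0"
  shows "-2*\<i>*d* of_real((- 2 * Im e / Im d)*t) - 4*\<i>*e* of_real t = \<i>* of_real((-2*(- 2 * Im e / Im d)*Re d - 4*Re e)*t)"
  using assms by (simp add: complex_eq_iff field_simps)

lemma ReA:
  fixes a f :: complex and y s :: real
  shows "Re (- 2 * \<i> * a * of_real y - 4 * \<i> * f * of_real s) = 2 * Im a * y + 4 * Im f * s"
  by simp

lemma gam:
  fixes d s :: complex
  assumes "Im d \<noteq> 0"
  shows "-2*(- 2 * Im (d * s) / Im d)*Re d - 4*Re (d * s) = 4*(cmod d)^2*Im s/Im d"
  unfolding cmod_power2 using assms by (simp add: field_simps power2_eq_square)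

lemma perset:
  fixes g th :: real
  assumes "g \<noteq> 0"
  shows "{t. \<exists>n::int. g*t = th + 2*n*pi} = {th/g + of_int k * (2 * pi / \<bar>g\<bar>) | k. True}"
proof (intro set_eqI iffI)
  fix t assume "t \<in> {t. \<exists>n::int. g*t = th + 2*n*pi}"
  then obtain n::int where n: "g*t = th + 2*n*pi" by auto
  show "t \<in> {th/g + of_int k * (2 * pi / \<bar>g\<bar>) | k. True}"
  proof (cases "g > 0")
    case True
    have "t = th/g + of_int n * (2*pi/\<bar>g\<bar>)" using True n by (simp add: field_simps)
    then show ?thesis by blast
  next
    case False
    then have "g < 0" using assms by simp
    then have "t = th/g + of_int (-n) * (2*pi/\<bar>g\<bar>)" using n by (simp add: field_simps)
    then show ?thesis by blast
  qed
next
  fix t assume "t \<in> {th/g + of_int k * (2 * pi / \<bar>g\<bar>) | k. True}"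
  then obtain k::int where k: "t = th/g + of_int k * (2 * pi / \<bar>g\<bar>)" by auto
  show "t \<in> {t. \<exists>n::int. g*t = th + 2*n*pi}"
  proof (cases "g > 0")
    case True
    have "g*t = th + 2 * of_int k * pi" using True k assms by (simp add: field_simps)
    then show ?thesis by blast
  next
    case False
    then have "g < 0" using assms by simp
    then have "g*t = th + 2 * of_int (-k) * pi" using k by (simp add: field_simps)
    then show ?thesis by blast
  qed
qed

theorem mainTheorem5:
  fixes z zb w wb :: complex
  assumes hz: "Im z > 0" and hzb: "Im zb < 0"
    and hw: "w \<in> {1, -1}" and hwb: "wb \<in> {1, -1}"
  defines "q \<equiv> soliton_q z zb w wb"
    and "D \<equiv> soliton_den z zb w wb"
    and "V \<equiv> - 2 * Im (zb\<^sup>2 - z\<^sup>2) / Im (zb - z)"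
  defines "\<beta> \<equiv> 2 * V * Im zb + 4 * Im (zb\<^sup>2)"
    and "\<gamma> \<equiv> - 2 * V * Re (zb - z) - 4 * Re (zb\<^sup>2 - z\<^sup>2)"
  shows
    "(\<forall>x t. D x t \<noteq> 0 \<longrightarrow>
        (\<lambda>s. q x s) differentiable (at t) \<and>
        (\<lambda>y. q y t) differentiable (at x) \<and>
        (\<lambda>y. vector_derivative (\<lambda>u. q u t) (at y)) differentiable (at x) \<and>
        \<i> * vector_derivative (\<lambda>s. q x s) (at t)
          + vector_derivative (\<lambda>y. vector_derivative (\<lambda>u. q u t) (at y)) (at x)
          + 2 * (q x t)\<^sup>2 * q (- x) (- t) = 0)
     \<and> (\<forall>t. cmod (q (V * t) t) =
          2 * cmod (zb - z) * exp (\<beta> * t) / cmod (1 + w * wb * exp (\<i> * of_real (\<gamma> * t))))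
     \<and> \<gamma> = 4 * (cmod (z - zb))\<^sup>2 * Im (z + zb) / Im (zb - z)
     \<and> (Im (z + zb) \<noteq> 0 \<longrightarrow> \<gamma> \<noteq> 0 \<and>
          (\<exists>t0. {t. D (V * t) t = 0} = {t0 + of_int k * (2 * pi / \<bar>\<gamma>\<bar>) | k. True}))"
proof -
  define c where "c = w * wb"
  define K where "K = 2 * \<i> * (zb - z) * wb"
  define A where "A = (\<lambda>(y::real) (s::real). - 2 * \<i> * zb * of_real y - 4 * \<i> * zb\<^sup>2 * of_real s)"
  define R where "R = (\<lambda>(y::real) (s::real). - 2 * \<i> * (zb - z) * of_real y - 4 * \<i> * (zb\<^sup>2 - z\<^sup>2) * of_real s)"
  have c1: "c = 1 \<or> c = -1" using hw hwb unfolding c_def by auto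
  have wb1: "wb = 1 \<or> wb = -1" using hwb by auto
  have qf: "q y s = K * exp (A y s) / (1 + c * exp (R y s))" for y s
    unfolding q_def soliton_q_def soliton_den_def K_def A_def R_def c_def by simp
  have Df: "D y s = 1 + c * exp (R y s)" for y s
    unfolding D_def soliton_den_def R_def c_def by simp
  have part1: "\<forall>x t. D x t \<noteq> 0 \<longrightarrow>
        (\<lambda>s. q x s) differentiable (at t) \<and>
        (\<lambda>y. q y t) differentiable (at x) \<and>
        (\<lambda>y. vector_derivative (\<lambda>u. q u t) (at y)) differentiable (at x) \<and>
        \<i> * vector_derivative (\<lambda>s. q x s) (at t)
          + vector_derivative (\<lambda>y. vector_derivative (\<lambda>u. q u t) (at y)) (at x)
          + 2 * (q x t)\<^sup>2 * q (- x) (- t) = 0"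
  proof (intro allI impI)
    fix x t :: real
    assume Dxt: "D x t \<noteq> 0"
    define pt where "pt = -4*\<i>*zb^2"
    define rt where "rt = -4*\<i>*(zb^2-z^2)"
    define px where "px = -2*\<i>*zb"
    define rx where "rx = -2*\<i>*(zb-z)"
    have At: "A x s = pt * of_real s + A x 0" for s unfolding A_def pt_def by (simp add: algebra_simps)
    have Rt: "R x s = rt * of_real s + R x 0" for s unfolding R_def rt_def by (simp add: algebra_simps)
    have Ax: "A y t = px * of_real y + A 0 t" for y unfolding A_def px_def by (simp add: algebra_simps)
    have Rx: "R y t = rx * of_real y + R 0 t" for y unfolding R_def rx_def by (simp add: algebra_simps)
    have qt: "(\<lambda>s. q x s) = (\<lambda>s. K*exp(pt * of_real s + A x 0)/(1+c*exp(rt * of_real s + R x 0)))"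
      by (rule ext) (simp only: qf At[symmetric] Rt[symmetric])
    have qx: "(\<lambda>y. q y t) = (\<lambda>y. K*exp(px * of_real y + A 0 t)/(1+c*exp(rx * of_real y + R 0 t)))"
      by (rule ext) (simp only: qf Ax[symmetric] Rx[symmetric])
    have den: "1 + c * exp (R x t) \<noteq> 0" using Dxt Df by simp
    have dt: "((\<lambda>s. q x s) has_vector_derivative
        K*exp(A x t)*(pt + c*(pt-rt)*exp(R x t))/(1+c*exp(R x t))^2) (at t)"
      unfolding qt using d1[of c rt t "R x 0" K pt "A x 0"] den
      by (simp only: At[symmetric] Rt[symmetric]) blast
    have dxy: "((\<lambda>y. q y t) has_vector_derivative
        K*exp(A y t)*(px + c*(px-rx)*exp(R y t))/(1+c*exp(R y t))^2) (at y)"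
      if "1 + c * exp (R y t) \<noteq> 0" for y
      unfolding qx using d1[of c rx y "R 0 t" K px "A 0 t"] that
      by (simp only: Ax[symmetric] Rx[symmetric]) blast
    define G where "G = (\<lambda>y::real. K*exp(px * of_real y + A 0 t)*(px + c*(px-rx)*exp(rx * of_real y + R 0 t))/(1+c*exp(rx * of_real y + R 0 t))^2)"
    define S where "S = {y::real. 1 + c * exp (R y t) \<noteq> 0}"
    have openS: "open S"
    proof -
      have "S = {y. (\<lambda>y. 1 + c * exp (R y t)) y \<noteq> (\<lambda>y. 0) y}" unfolding S_def by simp
      also have "open \<dots>"
        by (rule open_Collect_neq) (auto simp: R_def intro!: continuous_intros)
      finally show ?thesis .
    qed
    have xS: "x \<in> S" unfolding S_def using den by simp
    have Geq: "G y = vector_derivative (\<lambda>u. q u t) (at y)" if "y \<in> S" for y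
    proof -
      have "1 + c * exp (R y t) \<noteq> 0" using that S_def by simp
      from vector_derivative_at[OF dxy[OF this]] show ?thesis
        unfolding G_def by (simp only: Ax[symmetric] Rx[symmetric])
    qed
    have dG: "(G has_vector_derivative
       K*exp(A x t)*(px^2 + c*(2*px^2-2*px*rx-rx^2)*exp(R x t) + c^2*(px-rx)^2*exp(R x t)^2)/(1+c*exp(R x t))^3) (at x)"
      unfolding G_def using d2[of c rx x "R 0 t" K px "A 0 t"] den
      by (simp only: Ax[symmetric] Rx[symmetric]) blast
    have dxx: "((\<lambda>y. vector_derivative (\<lambda>u. q u t) (at y)) has_vector_derivative
       K*exp(A x t)*(px^2 + c*(2*px^2-2*px*rx-rx^2)*exp(R x t) + c^2*(px-rx)^2*exp(R x t)^2)/(1+c*exp(R x t))^3) (at x)"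
      by (rule has_vector_derivative_transform_within_open[OF dG openS xS Geq])
    have Am: "A (-x) (-t) = - A x t" unfolding A_def by simp
    have Rm: "R (-x) (-t) = - R x t" unfolding R_def by simp
    have qm: "q (-x) (-t) = K * inverse (exp (A x t)) / (1 + c * inverse (exp (R x t)))"
      unfolding qf Am Rm exp_minus ..
    have eq: "\<i> * vector_derivative (\<lambda>s. q x s) (at t)
          + vector_derivative (\<lambda>y. vector_derivative (\<lambda>u. q u t) (at y)) (at x)
          + 2 * (q x t)\<^sup>2 * q (- x) (- t) = 0"
      unfolding vector_derivative_at[OF dt] vector_derivative_at[OF dxx] qm
      unfolding qf K_def pt_def rt_def px_def rx_def
      by (rule alg[OF c1 wb1 exp_not_eq_zero exp_not_eq_zero den])
    show "(\<lambda>s. q x s) differentiable (at t) \<and>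
        (\<lambda>y. q y t) differentiable (at x) \<and>
        (\<lambda>y. vector_derivative (\<lambda>u. q u t) (at y)) differentiable (at x) \<and>
        \<i> * vector_derivative (\<lambda>s. q x s) (at t)
          + vector_derivative (\<lambda>y. vector_derivative (\<lambda>u. q u t) (at y)) (at x)
          + 2 * (q x t)\<^sup>2 * q (- x) (- t) = 0"
      using dt dxy[OF den] dxx eq by (auto intro: differentiableI_vector)
  qed
  have Imd: "Im (zb - z) < 0" using hz hzb by simp
  hence Imd0: "Im (zb - z) \<noteq> 0" by simp
  have e: "zb^2 - z^2 = (zb - z)*(zb + z)" by (simp add: power2_eq_square algebra_simps)
  have RV: "R (V*t) t = \<i> * of_real (\<gamma>*t)" for t
    unfolding R_def V_def \<gamma>_def using RVlem[OF Imd0, of "zb^2 - z^2" t] by simp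
  have AV: "Re (A (V*t) t) = \<beta>*t" for t
    unfolding A_def \<beta>_def by (simp add: algebra_simps)
  have normK: "cmod K = 2 * cmod (zb - z)" using wb1 by (auto simp: K_def norm_mult)
  have part2: "\<forall>t. cmod (q (V * t) t) =
          2 * cmod (zb - z) * exp (\<beta> * t) / cmod (1 + w * wb * exp (\<i> * of_real (\<gamma> * t)))"
  proof
    fix t
    show "cmod (q (V * t) t) =
          2 * cmod (zb - z) * exp (\<beta> * t) / cmod (1 + w * wb * exp (\<i> * of_real (\<gamma> * t)))"
      unfolding qf norm_divide norm_mult normK norm_exp_eq_Re AV RV c_def ..
  qed
  have part3: "\<gamma> = 4 * (cmod (z - zb))\<^sup>2 * Im (z + zb) / Im (zb - z)"
  proof -
    have "\<gamma> = -2*(- 2 * Im ((zb - z) * (zb + z)) / Im (zb - z))*Re (zb - z) - 4*Re ((zb - z) * (zb + z))"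
      unfolding \<gamma>_def V_def e by simp
    also have "\<dots> = 4*(cmod (zb - z))^2*Im (zb + z)/Im (zb - z)" by (rule gam[OF Imd0])
    finally show ?thesis by (simp add: norm_minus_commute add.commute)
  qed
  have part4: "Im (z + zb) \<noteq> 0 \<longrightarrow> \<gamma> \<noteq> 0 \<and>
          (\<exists>t0. {t. D (V * t) t = 0} = {t0 + of_int k * (2 * pi / \<bar>\<gamma>\<bar>) | k. True})"
  proof
    assume hs: "Im (z + zb) \<noteq> 0"
    have "z - zb \<noteq> 0" using Imd by auto
    hence "cmod (z - zb) > 0" by simp
    hence g0: "\<gamma> \<noteq> 0" unfolding part3 using hs Imd0 by simp
    define th where "th = (if c = 1 then pi else 0)"
    have cth: "-c = exp (\<i> * of_real th)" using c1 unfolding th_def by auto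
    have key: "D (V*t) t = 0 \<longleftrightarrow> (\<exists>n::int. \<gamma>*t = th + 2*n*pi)" for t
    proof -
      have "D (V*t) t = 0 \<longleftrightarrow> 1 + c * exp (\<i> * of_real (\<gamma>*t)) = 0" by (simp add: Df RV)
      also have "\<dots> \<longleftrightarrow> exp (\<i> * of_real (\<gamma>*t)) = -c" using c1 by (auto simp: add_eq_0_iff)
      also have "\<dots> \<longleftrightarrow> exp (\<i> * of_real (\<gamma>*t)) = exp (\<i> * of_real th)" by (simp add: cth)
      also have "\<dots> \<longleftrightarrow> (\<exists>n::int. \<i> * of_real (\<gamma>*t) = \<i> * of_real th + (of_int (2 * n) * pi) * \<i>)"
        by (rule exp_eq)
      also have "\<dots> \<longleftrightarrow> (\<exists>n::int. \<gamma>*t = th + 2*n*pi)"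
        by (simp add: complex_eq_iff)
      finally show ?thesis .
    qed
    have "{t. D (V * t) t = 0} = {t. \<exists>n::int. \<gamma>*t = th + 2*n*pi}" using key by auto
    also have "\<dots> = {th/\<gamma> + of_int k * (2 * pi / \<bar>\<gamma>\<bar>) | k. True}" by (rule perset[OF g0])
    finally show "\<gamma> \<noteq> 0 \<and> (\<exists>t0. {t. D (V * t) t = 0} = {t0 + of_int k * (2 * pi / \<bar>\<gamma>\<bar>) | k. True})"
      using g0 by blast
  qed
  show ?thesis using part1 part2 part3 part4 by blast
qed

end
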